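(* Let $0<m<L$, $\kappa=L/m$, $\delta\in(0,1)$, and suppose $\alpha>\alpha_-:=\frac{1}{1-\delta}\left(\frac{2}{L+m}-\frac{\delta}{m}\right)$ and \[ \frac1L\le\alpha\le\frac{2}{(1+\delta)L+(1-\delta)m}. \] Define \begin{multline*} F(t,\rho,\lambda,\gamma) = -\alpha^2\big((L-m)^2-2mL\lambda(1-\delta^2)\big)\rho^2-\gamma^2(t-1+L\alpha)^2 + 2\lambda\alpha\rho^2(L+m)(t-1) \\ + \lambda\rho^2(2-\lambda\delta^2)(t-1)^2 - 2\alpha\gamma\big((L-m)-m\lambda(1-\delta^2)\big)(1-\alpha L-t)t + 2\lambda\gamma\big((1-\alpha L)t-\rho^2\big)(t-1), \end{multline*} and set $\rho_\star=1-\alpha m(1-\delta)$, $\lambda_\star=\dfrac{2-\alpha(L+m)}{\delta^2}$, and \[ \gamma_\star=\frac{\rho_\star\big(\kappa-1+(\kappa+1)(\delta-\rho_\star)\big)}{(\kappa-(1-\delta))\,\delta}. \] Then $\partial_t F(0,\rho_\star,\lambda_\star,\gamma_\star)\le 0$.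
   Context: $\partial_t F$ denotes the partial derivative of $F$ with respect to its first argument $t$. *)

theory Defs
  imports "HOL-Analysis.Analysis"
begin

definition F_fun :: "real \<Rightarrow> real \<Rightarrow> real \<Rightarrow> real \<Rightarrow> real \<Rightarrow> real \<Rightarrow> real \<Rightarrow> real \<Rightarrow> real" where
  "F_fun \<alpha> L m \<delta> t \<rho> lam \<gamma> =
     - (\<alpha> ^ 2) * ((L - m) ^ 2 - 2 * m * L * lam * (1 - \<delta> ^ 2)) * \<rho> ^ 2
     - \<gamma> ^ 2 * (t - 1 + L * \<alpha>) ^ 2
     + 2 * lam * \<alpha> * \<rho> ^ 2 * (L + m) * (t - 1)
     + lam * \<rho> ^ 2 * (2 - lam * \<delta> ^ 2) * (t - 1) ^ 2
     - 2 * \<alpha> * \<gamma> * ((L - m) - m * lam * (1 - \<delta> ^ 2)) * (1 - \<alpha> * L - t) * t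
     + 2 * lam * \<gamma> * ((1 - \<alpha> * L) * t - \<rho> ^ 2) * (t - 1)"

end

theory Submission imports Defs begin

lemma key:
  fixes s d w x k r :: real
  assumes s: "s > 0" and d: "0 < d" "d < 1" and w: "w \<ge> 0"
    and x: "x * (2 + s * (1+d)) = 2 - s * w" and k: "k = 1 + s" and r: "r = 1-x*(1-d)"
  shows "-(x*k-1)*(r*(k-1+(k+1)*(d-r))/((k-(1-d))*d)) + x*((k-1) - ((2-x*(k+1))/d^2)*(1-d^2))*(x*k-1)
     - ((2-x*(k+1))/d^2)*(1-x*k+r^2) \<le> 0"
proof -
  define e where "e = 1 - d"
  define P where "P = 8 * d^4 + 8 * d^3 * w + 24 * s * d^4 + 12 * s * d^3 * e + 52 * s * d^3 * e * w + 32 * s * d^4 * w + 12 * s * d^2 * e^2 * w + 12 * s * d^2 * e * w^2 + 4 * s * d^3 * w^2 + 48 * s^2 * d^4 * e + 24 * s^2 * d^5 + 26 * s^2 * d^3 * e^2 + 4 * s^2 * d^2 * e^3 + 104 * s^2 * d^3 * e * w + 48 * s^2 * d^4 * w + 50 * s^2 * d^2 * e^2 * w + 6 * s^2 * d * e^3 * w + 56 * s^2 * d^2 * e^2 * w^2 + 54 * s^2 * d^3 * e * w^2 + 12 * s^2 * d^4 * w^2 + 12 * s^2 * d * e^3 * w^2 + 4 * s^2 * d^2 * e * w^3 + 6 * s^2 * d * e^2 * w^3 + 14 * s^3 * d^3 * e^2 + 20 * s^3 * d^4 * e + 8 * s^3 * d^5 + 3 * s^3 * d^2 * e^3 + 56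 * s^3 * d^2 * e^2 * w + 84 * s^3 * d^3 * e * w + 32 * s^3 * d^4 * w + 11 * s^3 * d * e^3 * w + 52 * s^3 * d^2 * e * w^2 + 12 * s^3 * d^3 * w^2 + 4 * s^3 * e^3 * w^2 + 30 * s^3 * d * e^2 * w^2 + 10 * s^3 * d^2 * e * w^3 + 4 * s^3 * e^3 * w^3 + 15 * s^3 * d * e^2 * w^3 + 18 * s^4 * d^2 * e^2 * w + 24 * s^4 * d^3 * e * w + 8 * s^4 * d^4 * w + 4 * s^4 * d * e^3 * w + 26 * s^4 * d^2 * e * w^2 + 4 * s^4 * d^3 * w^2 + 4 * s^4 * e^3 * w^2 + 20 * s^4 * d * e^2 * w^2 + 4 * s^4 * e^2 * w^3 + 8 * s^4 * d * e * w^3 + 4 * s^5 * d^2 * e * w^2 + 4 * s^5 * d * e^2 * w^2 + 1 * s^5 * e^3 * w^2 + 1 * s^5 * e^2 * w^3 + 2 * s^5 * d * e * w^3"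
  define c0 where "c0 = -6 * d^1 + 2 * d^2 - 4 * s^1 + 1 * s^1 * d^2"
  define c1 where "c1 = 18 * d^1 - 12 * d^2 + 12 * s^1 + 3 * s^1 * d^1 - 7 * s^1 * d^2 + 4 * s^2 - 2 * s^2 * d^2"
  define c2 where "c2 = -18 * d^1 + 18 * d^2 - 2 * d^3 - 12 * s^1 - 6 * s^1 * d^1 + 14 * s^1 * d^2 - 8 * s^2 + 6 * s^2 * d^2 - 1 * s^3 + 1 * s^3 * d^2"
  define c3 where "c3 = 6 * d^1 - 8 * d^2 + 2 * d^3 + 4 * s^1 + 3 * s^1 * d^1 - 8 * s^1 * d^2 + 1 * s^1 * d^3 + 4 * s^2 - 4 * s^2 * d^2 + 1 * s^3 - 1 * s^3 * d^2"
  define Den where "Den = 2 + s * (1+d)"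
  have e: "e > 0" using d e_def by simp
  have P: "P \<ge> 0" unfolding P_def using s d e w
    by (intro add_nonneg_nonneg mult_nonneg_nonneg; simp)
  have Dp: "Den > 0" unfolding Den_def using s d by (simp add: add_pos_nonneg)
  have sd: "s + d > 0" using s d by simp
  have kk: "k-(1-d) = s+d" using k by simp
  define lN where "lN = 2-x*(k+1)"
  define gN where "gN = r*(k-1+(k+1)*(d-r))"
  define lam where "lam = lN/d^2"
  define g where "g = gN/((s+d)*d)"
  have lam: "lam*d^2 = lN" unfolding lam_def using d by simp
  have g: "g*((s+d)*d) = gN" unfolding g_def using d sd by simp
  have LHS: "-(x*k-1)*(r*(k-1+(k+1)*(d-r))/((k-(1-d))*d)) + x*((k-1) - ((2-x*(k+1))/d^2)*(1-d^2))*(x*k-1)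
     - ((2-x*(k+1))/d^2)*(1-x*k+r^2) = -(x*k-1)*g + x*((k-1) - lam*(1-d^2))*(x*k-1) - lam*(1-x*k+r^2)"
    unfolding g_def lam_def gN_def lN_def kk by simp
  have "(-(x*k-1)*g + x*((k-1) - lam*(1-d^2))*(x*k-1) - lam*(1-x*k+r^2))*(d^2*(s+d))
     = -(x*k-1)*(g*((s+d)*d))*d + x*((k-1)*d^2 - (lam*d^2)*(1-d^2))*(x*k-1)*(s+d) - (lam*d^2)*(1-x*k+r^2)*(s+d)"
    by (simp add: algebra_simps power2_eq_square)
  also have "\<dots> = -(x*k-1)*gN*d + x*((k-1)*d^2 - lN*(1-d^2))*(x*k-1)*(s+d) - lN*(1-x*k+r^2)*(s+d)"
    unfolding lam g by simp
  also have "\<dots> = c0 + c1*x + c2*x^2 + c3*x^3"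
    unfolding gN_def lN_def k r c0_def c1_def c2_def c3_def
    by (simp add: algebra_simps power2_eq_square power3_eq_cube)
  finally have id1: "-(x*k-1)*(r*(k-1+(k+1)*(d-r))/((k-(1-d))*d)) + x*((k-1) - ((2-x*(k+1))/d^2)*(1-d^2))*(x*k-1)
     - ((2-x*(k+1))/d^2)*(1-x*k+r^2) = (c0 + c1*x + c2*x^2 + c3*x^3) / (d^2*(s+d))"
    unfolding LHS using d sd by (simp add: eq_divide_eq)
  have id2: "(c0 + c1*x + c2*x^2 + c3*x^3) * Den^3 = c0*Den^3 + c1*(x*Den)*Den^2 + c2*(x*Den)^2*Den + c3*(x*Den)^3"
    by (simp add: algebra_simps power2_eq_square power3_eq_cube)
  also have "\<dots> = - s * P" unfolding x[folded Den_def]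
    unfolding c0_def c1_def c2_def c3_def P_def Den_def e_def
    by algebra
  finally have "c0 + c1*x + c2*x^2 + c3*x^3 = - s * P / Den^3" using Dp
    by (simp add: field_simps)
  then have "c0 + c1*x + c2*x^2 + c3*x^3 \<le> 0" using s P Dp
    by (simp add: divide_nonpos_pos)
  then show ?thesis unfolding id1 using sd d
    by (simp add: divide_nonpos_pos)
qed

lemma dF: "((\<lambda>t. F_fun a L m d t r l g) has_real_derivative
  (-2*g^2*(L*a-1) + 2*l*a*r^2*(L+m) - 2*l*r^2*(2-l*d^2) + 2*a*g*((L - m) - m * l * (1 - d ^ 2))*(a*L-1) - 2*l*g*(1-a*L+r^2))) (at 0)"
  unfolding F_fun_def
  apply (rule derivative_eq_intros refl | simp)+
  apply (simp add: algebra_simps power2_eq_square)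
  done

theorem lemma3p4:
  fixes m L \<kappa> \<delta> \<alpha> \<rho>s lams \<gamma>s :: real
  assumes "0 < m" and "m < L"
    and "\<kappa> = L / m"
    and "0 < \<delta>" and "\<delta> < 1"
    and "\<alpha> > (1 / (1 - \<delta>)) * (2 / (L + m) - \<delta> / m)"
    and "1 / L \<le> \<alpha>"
    and "\<alpha> \<le> 2 / ((1 + \<delta>) * L + (1 - \<delta>) * m)"
    and "\<rho>s = 1 - \<alpha> * m * (1 - \<delta>)"
    and "lams = (2 - \<alpha> * (L + m)) / \<delta> ^ 2"
    and "\<gamma>s = \<rho>s * (\<kappa> - 1 + (\<kappa> + 1) * (\<delta> - \<rho>s)) / ((\<kappa> - (1 - \<delta>)) * \<delta>)"
  shows "deriv (\<lambda>t. F_fun \<alpha> L m \<delta> t \<rho>s lams \<gamma>s) 0 \<le> 0"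
proof -
  note A = assms
  define s where "s = \<kappa> - 1"
  define x where "x = \<alpha> * m"
  define Den where "Den = 2 + s * (1+\<delta>)"
  define w where "w = ((1 - x) * Den - s * (1+\<delta>)) / s"
  have mk: "m * \<kappa> = L" using A(1,3) by simp
  have kgt: "\<kappa> > 1" using A(1,2,3) by simp
  have s0: "s > 0" using kgt s_def by simp
  have Lpos: "L > 0" using A(1,2) by simp
  have Dpos: "(1 + \<delta>) * L + (1 - \<delta>) * m > 0" using A(1,4,5) Lpos
    by (simp add: add_pos_pos)
  have up: "\<alpha> * ((1 + \<delta>) * L + (1 - \<delta>) * m) \<le> 2"
    using A(8) Dpos by (simp add: le_divide_eq)
  have DenL: "m * Den = (1 + \<delta>) * L + (1 - \<delta>) * m"
    unfolding Den_def s_def using mk by (simp add: algebra_simps)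
  have xDen: "x * Den \<le> 2"
  proof -
    have "m * (x * Den) = \<alpha> * (m * Den) * m" unfolding x_def by (simp add: algebra_simps)
    also have "\<dots> \<le> 2 * m" using up DenL A(1) by (simp add: mult_right_mono)
    finally show ?thesis using A(1) by (simp add: mult_le_cancel_left_pos)
  qed
  have sw: "s * w = (1 - x) * Den - s * (1+\<delta>)" unfolding w_def using s0 by simp
  have w0: "w \<ge> 0"
  proof -
    have "s * w \<ge> 0" unfolding sw using xDen unfolding Den_def by (simp add: algebra_simps)
    then show ?thesis using s0 by (simp add: zero_le_mult_iff)
  qed
  have xeq: "x * (2 + s * (1+\<delta>)) = 2 - s * w" unfolding sw Den_def by (simp add: algebra_simps)
  have k: "\<kappa> = 1 + s" unfolding s_def by simp
  have r: "\<rho>s = 1 - x*(1-\<delta>)" unfolding x_def A(9) by simp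
  note KEY = key[OF s0 A(4) A(5) w0 xeq k r]
  have l2: "(2-x*(\<kappa>+1))/\<delta>^2 = lams" using A(10) mk unfolding x_def
    by (simp add: algebra_simps)
  have KEY2: "-(x*\<kappa>-1)*\<gamma>s + x*((\<kappa>-1) - lams*(1-\<delta>^2))*(x*\<kappa>-1) - lams*(1-x*\<kappa>+\<rho>s^2) \<le> 0"
    using KEY unfolding l2 A(11)[symmetric] .
  have xk: "x*\<kappa> = \<alpha>*L" unfolding x_def using mk by (simp add: algebra_simps)
  have ll: "lams*\<delta>^2 = 2 - \<alpha>*(L+m)" using A(10) A(4) by simp
  have Dgt: "Den > 2" unfolding Den_def using s0 A(4) by simp
  have x1: "x < 1"
  proof (rule ccontr)
    assume "\<not> x < 1"
    then have "x * Den \<ge> 1 * Den" using Dgt by (intro mult_right_mono) auto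
    then show False using xDen Dgt by linarith
  qed
  have apos: "\<alpha> > 0" using A(7) Lpos by (smt (verit) divide_pos_pos)
  have x0: "x > 0" unfolding x_def using apos A(1) by simp
  have "x*(1-\<delta>) \<le> x*1" using x0 A(4) by (intro mult_left_mono) auto
  then have rpos: "\<rho>s > 0" unfolding r using x1 by linarith
  have lowm: "x*(1-\<delta>) > 2/(2+s) - \<delta>"
  proof -
    have "(1-\<delta>) * m > 0" using A(1,5) by simp
    then have "\<alpha> * ((1-\<delta>) * m) > (1 / (1 - \<delta>)) * (2 / (L + m) - \<delta> / m) * ((1-\<delta>) * m)"
      using mult_strict_right_mono[OF A(6) \<open>(1-\<delta>) * m > 0\<close>] by simp
    also have "(1 / (1 - \<delta>)) * (2 / (L + m) - \<delta> / m) * ((1-\<delta>) * m) = (2 / (L + m) - \<delta> / m) * m"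
      using A(5) by simp
    also have "(2 / (L + m) - \<delta> / m) * m = 2*m/(L+m) - \<delta>"
      using A(1) by (simp add: left_diff_distrib)
    also have "2*m/(L+m) = 2/(2+s)"
    proof -
      have "L+m = m*(2+s)" using mk k by (simp add: algebra_simps)
      then show ?thesis using A(1) by simp
    qed
    finally show ?thesis unfolding x_def by (simp add: algebra_simps)
  qed
  have num: "\<kappa> - 1 + (\<kappa> + 1) * (\<delta> - \<rho>s) \<ge> 0"
  proof -
    have "(2+s)*(x*(1-\<delta>)) > (2+s)*(2/(2+s) - \<delta>)" using lowm s0 by simp
    moreover have "(2+s)*(2/(2+s) - \<delta>) = 2 - (2+s)*\<delta>" 
    proof -
      have "2+s \<noteq> 0" using s0 by simp
      then have "(2+s)*(2/(2+s)) = 2" by (simp add: field_simps)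
      then show ?thesis by (simp add: right_diff_distrib)
    qed
    ultimately have "(2+s)*(x*(1-\<delta>)) > 2 - (2+s)*\<delta>" by simp
    then show ?thesis unfolding k r by (simp add: algebra_simps)
  qed
  have gam: "\<gamma>s \<ge> 0" unfolding A(11) using num rpos A(4) kgt
    by (intro divide_nonneg_pos mult_nonneg_nonneg mult_pos_pos) auto
  have D0: "deriv (\<lambda>t. F_fun \<alpha> L m \<delta> t \<rho>s lams \<gamma>s) 0 =
    2*\<gamma>s*(-(x*\<kappa>-1)*\<gamma>s + x*((\<kappa>-1) - lams*(1-\<delta>^2))*(x*\<kappa>-1) - lams*(1-x*\<kappa>+\<rho>s^2))"
    unfolding DERIV_imp_deriv[OF dF]
    using xk ll x_def by algebra
  show ?thesis unfolding D0 using gam KEY2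
    by (simp add: mult_nonneg_nonpos)
qed

end
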